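(* Let $\Gamma=(\mathcal{V},\mathcal{H})$ be an $(l,r)$-hyperflower on $N$ vertices with peripheral vertices $v_1,\ldots,v_l$. Let $\hat{\Gamma}=(\hat{\mathcal{V}},\hat{\mathcal{H}})$ be the $(1,r)$-hyperflower defined by $\hat{\mathcal{V}}:=\mathcal{V}\setminus\{v_2,\ldots,v_l\}$ and $\hat{\mathcal{H}}:=\{h\in\mathcal{H}: v_2,\ldots,v_l\notin h\}$. Then the spectrum of $\Gamma$ is given by the $N-l+1$ eigenvalues of $\hat{\Gamma}$ (counted with multiplicity) together with the eigenvalue $1$ with multiplicity at least $l-1$; that is, the eigenvalues of $\Gamma$ counted with multiplicity are those of $\hat\Gamma$ together with $l-1$ further eigenvalues equal to $1$.
   Context: A hypergraph $\Gamma=(\mathcal{V},\mathcal{H})$ has a finite vertex set $\mathcal{V}$ and a set $\mathcal{H}$ of nonempty subsets of $\mathcal{V}$ (hyperedges); standing assumption: no isolated vertices. $\deg(v)$ is the number of hyperedges containing $v$, $D$ the diagonal degree matrix, $A$ the matrix with $A_{ii}=0$ and $A_{ij}=-\#\{h\in\mathcal{H}: v_i,v_j\in h\}$ for $i\ne j$, and the spectrum of $\Gamma$ is the spectrum of its (signless) normalized Laplacian $L=\mathrm{Id}-D^{-1}A$. An $(l,r)$-hyperflower is a hypergraph whose vertex set is $\mathcal{V}=U\sqcup\mathcal{W}$ with $U=\{v_1,\ldots,v_l\}$ (peripheral vertices) and such that there are $r$ pairwise disjoint nonempty sets $h_1,\ldots,h_r\subseteq\mathcal{W}$ with $\mathcal{H}=\{h_i\cup\{v_j\}: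 i=1,\ldots,r,\ j=1,\ldots,l\}$ (by the no-isolated-vertex assumption, $\mathcal{W}=h_1\cup\cdots\cup h_r$). *)

theory Defs
  imports "Jordan_Normal_Form.Char_Poly"
begin

definition hypergraph :: "'a set \<Rightarrow> 'a set set \<Rightarrow> bool" where
  "hypergraph V H \<longleftrightarrow> finite V \<and> (\<forall>h\<in>H. h \<noteq> {} \<and> h \<subseteq> V) \<and> (\<forall>x\<in>V. \<exists>h\<in>H. x \<in> h)"

definition hdeg :: "'a set set \<Rightarrow> 'a \<Rightarrow> nat" where
  "hdeg H x = card {h\<in>H. x \<in> h}"

definition vlist :: "'a::linorder set \<Rightarrow> 'a list" where
  "vlist V = sorted_list_of_set V"

definition adj_mat :: "'a::linorder set \<Rightarrow> 'a set set \<Rightarrow> real mat" where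
  "adj_mat V H = mat (card V) (card V) (\<lambda>(i,j).
      if i = j then 0 else - real (card {h\<in>H. vlist V ! i \<in> h \<and> vlist V ! j \<in> h}))"

definition deg_mat :: "'a::linorder set \<Rightarrow> 'a set set \<Rightarrow> real mat" where
  "deg_mat V H = mat (card V) (card V) (\<lambda>(i,j). if i = j then real (hdeg H (vlist V ! i)) else 0)"

text \<open>Inverse of the (diagonal, invertible since no isolated vertices) degree matrix.\<close>
definition deg_inv_mat :: "'a::linorder set \<Rightarrow> 'a set set \<Rightarrow> real mat" where
  "deg_inv_mat V H = mat (card V) (card V) (\<lambda>(i,j). if i = j then 1 / real (hdeg H (vlist V ! i)) else 0)"

definition norm_laplacian :: "'a::linorder set \<Rightarrow> 'a set set \<Rightarrow> real mat" where
  "norm_laplacian V H = 1\<^sub>m (card V) - deg_inv_mat V H * adj_mat V H"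

definition hspectrum :: "'a::linorder set \<Rightarrow> 'a set set \<Rightarrow> complex multiset" where
  "hspectrum V H = proots (char_poly (map_mat complex_of_real (norm_laplacian V H)))"

text \<open>(l,r)-hyperflower with peripheral vertices v 1..v l and petals hs 1..hs r.\<close>
definition hyperflower :: "'a set \<Rightarrow> 'a set set \<Rightarrow> nat \<Rightarrow> nat \<Rightarrow> (nat \<Rightarrow> 'a) \<Rightarrow> (nat \<Rightarrow> 'a set) \<Rightarrow> bool" where
  "hyperflower V H l r v hs \<longleftrightarrow>
     hypergraph V H \<and> inj_on v {1..l} \<and>
     (\<forall>i\<in>{1..r}. hs i \<noteq> {} \<and> hs i \<inter> v ` {1..l} = {}) \<and>
     (\<forall>i\<in>{1..r}. \<forall>k\<in>{1..r}. i \<noteq> k \<longrightarrow> hs i \<inter> hs k = {}) \<and>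
     V = v ` {1..l} \<union> (\<Union>i\<in>{1..r}. hs i) \<and>
     H = {hs i \<union> {v j} | i j. i \<in> {1..r} \<and> j \<in> {1..l}}"

end

theory Submission
  imports Defs
begin


lemma sum_unique:
  assumes "distinct ys" "p < length ys"
  shows "(\<Sum>k\<in>{0..<length ys}. if ys!p = ys!k then f k else 0) = f p"
proof -
  have "(\<Sum>k\<in>{0..<length ys}. if ys!p = ys!k then f k else 0) = (\<Sum>k\<in>{0..<length ys}. if p = k then f k else 0)"
    by (rule sum.cong, simp, use assms nth_eq_iff_index_eq in auto)
  also have "\<dots> = f p" using assms by simp
  finally show ?thesis .
qed

lemma perm_char_poly:
  fixes g :: "'a \<Rightarrow> 'a \<Rightarrow> 'b::comm_ring_1"
  assumes dx: "distinct xs" and dy: "distinct ys" and s: "set xs = set ys"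
  shows "char_poly (mat (length xs) (length xs) (\<lambda>(i,j). g (xs!i) (xs!j)))
       = char_poly (mat (length ys) (length ys) (\<lambda>(i,j). g (ys!i) (ys!j)))"
proof -
  have len: "length xs = length ys" using dx dy s distinct_card by metis
  define n where "n = length ys"
  define A where "A = mat n n (\<lambda>(i,j). g (xs!i) (xs!j))"
  define B where "B = mat n n (\<lambda>(i,j). g (ys!i) (ys!j))"
  define P where "P = mat n n (\<lambda>(i,j). if xs!i = ys!j then (1::'b) else 0)"
  define Q where "Q = mat n n (\<lambda>(i,j). if ys!i = xs!j then (1::'b) else 0)"
  have ex: "\<exists>p<n. xs!i = ys!p" if "i < n" for i
    using that s len unfolding n_def by (metis in_set_conv_nth nth_mem)
  have ey: "\<exists>p<n. ys!i = xs!p" if "i < n" for i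
    using that s len unfolding n_def by (metis in_set_conv_nth nth_mem)
  have PQ: "P * Q = 1\<^sub>m n"
  proof (rule eq_matI)
    fix i j assume ij: "i < dim_row (1\<^sub>m n)" "j < dim_col (1\<^sub>m n)"
    then have i: "i < n" and j: "j < n" by auto
    obtain p where p: "p < n" "xs!i = ys!p" using ex[OF i] by blast
    have "(P * Q) $$ (i,j) = (\<Sum>k\<in>{0..<n}. (if xs!i = ys!k then 1 else 0) * (if ys!k = xs!j then 1 else 0))"
      using i j by (simp add: P_def Q_def scalar_prod_def)
    also have "\<dots> = (\<Sum>k\<in>{0..<n}. if ys!p = ys!k then (if ys!k = xs!j then 1 else 0) else 0)"
      using p by (intro sum.cong) auto
    also have "\<dots> = (if ys!p = xs!j then 1 else 0)" unfolding n_def by (rule sum_unique[OF dy p(1)[unfolded n_def], of "\<lambda>k. if ys!k = xs!j then 1 else 0"])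
    also have "\<dots> = 1\<^sub>m n $$ (i,j)" using i j p dx len nth_eq_iff_index_eq unfolding n_def by fastforce
    finally show "(P * Q) $$ (i,j) = 1\<^sub>m n $$ (i,j)" .
  qed (auto simp: P_def Q_def)
  have QP: "Q * P = 1\<^sub>m n"
  proof (rule eq_matI)
    fix i j assume ij: "i < dim_row (1\<^sub>m n)" "j < dim_col (1\<^sub>m n)"
    then have i: "i < n" and j: "j < n" by auto
    obtain p where p: "p < n" "ys!i = xs!p" using ey[OF i] by blast
    have "(Q * P) $$ (i,j) = (\<Sum>k\<in>{0..<n}. (if ys!i = xs!k then 1 else 0) * (if xs!k = ys!j then 1 else 0))"
      using i j by (simp add: P_def Q_def scalar_prod_def)
    also have "\<dots> = (\<Sum>k\<in>{0..<n}. if xs!p = xs!k then (if xs!k = ys!j then 1 else 0) else 0)"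
      using p by (intro sum.cong) auto
    also have "\<dots> = (if xs!p = ys!j then 1 else 0)" unfolding n_def len[symmetric] by (rule sum_unique[OF dx p(1)[unfolded n_def len[symmetric]], of "\<lambda>k. if xs!k = ys!j then 1 else 0"])
    also have "\<dots> = 1\<^sub>m n $$ (i,j)" using i j p dy len nth_eq_iff_index_eq unfolding n_def by fastforce
    finally show "(Q * P) $$ (i,j) = 1\<^sub>m n $$ (i,j)" .
  qed (auto simp: P_def Q_def)
  have APBQ: "A = P * B * Q"
  proof (rule eq_matI)
    fix i j assume ij: "i < dim_row (P * B * Q)" "j < dim_col (P * B * Q)"
    then have i: "i < n" and j: "j < n" by (auto simp: P_def Q_def)
    obtain p where p: "p < n" "xs!i = ys!p" using ex[OF i] by blast
    obtain q where q: "q < n" "xs!j = ys!q" using ex[OF j] by blast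
    have PB: "(P * B) $$ (i,k) = g (xs!i) (ys!k)" if k: "k < n" for k
    proof -
      have "(P * B) $$ (i,k) = (\<Sum>t\<in>{0..<n}. (if xs!i = ys!t then 1 else 0) * g (ys!t) (ys!k))"
        using i k by (simp add: P_def B_def scalar_prod_def)
      also have "\<dots> = (\<Sum>t\<in>{0..<n}. if ys!p = ys!t then g (ys!t) (ys!k) else 0)"
        using p by (intro sum.cong) auto
      also have "\<dots> = g (xs!i) (ys!k)" using p(2) unfolding n_def by (simp only: sum_unique[OF dy p(1)[unfolded n_def], of "\<lambda>t. g (ys!t) (ys!k)"])
      finally show ?thesis .
    qed
    have "(P * B * Q) $$ (i,j) = (\<Sum>t\<in>{0..<n}. g (xs!i) (ys!t) * (if ys!t = xs!j then 1 else 0))"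
      using i j PB by (simp add: P_def B_def Q_def scalar_prod_def)
    also have "\<dots> = (\<Sum>t\<in>{0..<n}. if ys!q = ys!t then g (xs!i) (ys!t) else 0)"
      using q by (intro sum.cong) auto
    also have "\<dots> = g (xs!i) (xs!j)" using q(2) unfolding n_def by (simp only: sum_unique[OF dy q(1)[unfolded n_def], of "\<lambda>t. g (xs!i) (ys!t)"])
    finally show "A $$ (i,j) = (P * B * Q) $$ (i,j)" using i j by (simp add: A_def)
  qed (auto simp: A_def P_def Q_def)
  have c: "A \<in> carrier_mat n n" "B \<in> carrier_mat n n" "P \<in> carrier_mat n n" "Q \<in> carrier_mat n n"
    by (auto simp: A_def B_def P_def Q_def)
  have "similar_mat A B"
    unfolding similar_mat_def similar_mat_wit_def Let_def
    by (rule exI[of _ P], rule exI[of _ Q]) (use c PQ QP APBQ in auto)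
  then show ?thesis using char_poly_similar len unfolding A_def B_def n_def by metis
qed



lemma char_poly_block:
  fixes A1 :: "'b::idom mat"
  assumes A1: "A1 \<in> carrier_mat n n" and A3: "A3 \<in> carrier_mat m n" and A4: "A4 \<in> carrier_mat m m"
  shows "char_poly (four_block_mat A1 (0\<^sub>m n m) A3 A4) = char_poly A1 * char_poly A4"
proof -
  have "char_poly_matrix (four_block_mat A1 (0\<^sub>m n m) A3 A4) =
        four_block_mat (char_poly_matrix A1) (0\<^sub>m n m) (map_mat (\<lambda>a. [:- a:]) A3) (char_poly_matrix A4)"
    by (rule eq_matI) (use A1 A3 A4 in \<open>auto simp: char_poly_matrix_def\<close>)
  then show ?thesis unfolding char_poly_def
    by (simp add: det_four_block_mat_upper_right_zero[OF _ refl] A1 A3 A4)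
qed

lemma char_poly_one: "char_poly (1\<^sub>m k :: 'b::idom mat) = [:-1,1:]^k"
proof -
  have "char_poly (1\<^sub>m k :: 'b mat) = (\<Prod> a \<leftarrow> diag_mat (1\<^sub>m k :: 'b mat). [:- a, 1:])"
    by (rule char_poly_upper_triangular[of _ k]) (auto simp: upper_triangular_def)
  also have "diag_mat (1\<^sub>m k :: 'b mat) = replicate k 1"
    by (auto simp: diag_mat_def list_eq_iff_nth_eq)
  finally show ?thesis by (simp add: prod_list_replicate)
qed

lemma proots_one: "proots (char_poly (1\<^sub>m k :: complex mat)) = replicate_mset k 1"
  unfolding char_poly_one proots_power by simp

definition Lf :: "'a set set \<Rightarrow> 'a \<Rightarrow> 'a \<Rightarrow> complex" where
  "Lf H x y = (if x = y then 1 else of_nat (card {h\<in>H. x\<in>h \<and> y\<in>h}) / of_nat (hdeg H x))"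

lemma lap: "map_mat complex_of_real (norm_laplacian V H) = mat (card V) (card V) (\<lambda>(i,j). Lf H (vlist V!i) (vlist V!j))"
proof (rule eq_matI)
  fix i j assume "i < dim_row (mat (card V) (card V) (\<lambda>(i,j). Lf H (vlist V!i) (vlist V!j)))"
    "j < dim_col (mat (card V) (card V) (\<lambda>(i,j). Lf H (vlist V!i) (vlist V!j)))"
  then have i: "i < card V" and j: "j < card V" by auto
  have "(deg_inv_mat V H * adj_mat V H) $$ (i,j) =
     (\<Sum>k\<in>{0..<card V}. (if i = k then 1 / real (hdeg H (vlist V ! i)) else 0) * adj_mat V H $$ (k,j))"
    using i j by (simp add: deg_inv_mat_def scalar_prod_def adj_mat_def)
  also have "\<dots> = (\<Sum>k\<in>{0..<card V}. if k = i then 1 / real (hdeg H (vlist V ! i)) * adj_mat V H $$ (k,j) else 0)"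
    by (rule sum.cong) auto
  also have "\<dots> = 1 / real (hdeg H (vlist V ! i)) * adj_mat V H $$ (i,j)"
    using i by simp
  finally have e: "(deg_inv_mat V H * adj_mat V H) $$ (i,j) = 1 / real (hdeg H (vlist V ! i)) * adj_mat V H $$ (i,j)" .
  show "map_mat complex_of_real (norm_laplacian V H) $$ (i,j) = mat (card V) (card V) (\<lambda>(i,j). Lf H (vlist V!i) (vlist V!j)) $$ (i,j)"
    using i j e nth_eq_iff_index_eq[of "vlist V" i j]
    by (simp add: vlist_def norm_laplacian_def Lf_def adj_mat_def deg_inv_mat_def)
qed (auto simp: norm_laplacian_def deg_inv_mat_def adj_mat_def)



context
  fixes V :: "'a::linorder set" and H :: "'a set set" and l r :: nat
    and v :: "nat \<Rightarrow> 'a" and hs :: "nat \<Rightarrow> 'a set"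
  assumes hf: "hyperflower V H l r v hs" and l1: "l \<ge> 1"
begin

lemma hf_inj: "inj_on v {1..l}" using hf by (simp add: hyperflower_def)
lemma hf_ne: "i \<in> {1..r} \<Longrightarrow> hs i \<noteq> {}" using hf by (simp add: hyperflower_def)
lemma hf_disjv: "i \<in> {1..r} \<Longrightarrow> a \<in> {1..l} \<Longrightarrow> v a \<notin> hs i" using hf unfolding hyperflower_def by blast
lemma hf_disj: "i \<in> {1..r} \<Longrightarrow> k \<in> {1..r} \<Longrightarrow> x \<in> hs i \<Longrightarrow> x \<in> hs k \<Longrightarrow> i = k"
  using hf unfolding hyperflower_def by blast
lemma hf_V: "V = v ` {1..l} \<union> (\<Union>i\<in>{1..r}. hs i)" using hf by (simp add: hyperflower_def)
lemma hf_H: "H = (\<lambda>(i,j). hs i \<union> {v j}) ` ({1..r} \<times> {1..l})"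
proof -
  have "H = {hs i \<union> {v j} | i j. i \<in> {1..r} \<and> j \<in> {1..l}}" using hf unfolding hyperflower_def by blast
  then show ?thesis by fast
qed
lemma hf_fin: "finite V" using hf unfolding hyperflower_def hypergraph_def by blast

lemma hf_r: "r \<ge> 1"
proof (rule ccontr)
  assume "\<not> r \<ge> 1"
  then have "H = {}" using hf_H by auto
  moreover have "v 1 \<in> V" using hf_V l1 by auto
  ultimately show False using hf by (auto simp: hyperflower_def hypergraph_def)
qed

lemma hf_F_inj: "inj_on (\<lambda>(i,j). hs i \<union> {v j}) ({1..r} \<times> {1..l})"
proof (rule inj_onI, clarify)
  fix i j i' j' assume a: "i \<in> {1..r}" "j \<in> {1..l}" "i' \<in> {1..r}" "j' \<in> {1..l}"
    and e: "hs i \<union> {v j} = hs i' \<union> {v j'}"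
  have "v j \<in> hs i' \<union> {v j'}" using e by auto
  then have "v j = v j'" using hf_disjv a by auto
  then have jj: "j = j'" using hf_inj a by (auto dest: inj_onD)
  have "hs i = hs i'"
  proof -
    have "hs i = (hs i \<union> {v j}) - {v j}" using hf_disjv a by auto
    also have "\<dots> = (hs i' \<union> {v j'}) - {v j'}" using e jj by simp
    also have "\<dots> = hs i'" using hf_disjv a by auto
    finally show ?thesis .
  qed
  then show "i = i' \<and> j = j'" using jj hf_ne[OF a(1)] hf_disj[OF a(1) a(3)] by blast
qed

lemma hf_card: "card {h\<in>H. P h} = card {(i,j)\<in>{1..r} \<times> {1..l}. P (hs i \<union> {v j})}"
proof -
  have "{h\<in>H. P h} = (\<lambda>(i,j). hs i \<union> {v j}) ` {(i,j)\<in>{1..r} \<times> {1..l}. P (hs i \<union> {v j})}"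
    unfolding hf_H by auto
  moreover have "inj_on (\<lambda>(i,j). hs i \<union> {v j}) {(i,j)\<in>{1..r} \<times> {1..l}. P (hs i \<union> {v j})}"
    by (rule inj_on_subset[OF hf_F_inj]) auto
  ultimately show ?thesis by (simp add: card_image)
qed

lemma veq: "a \<in> {1..l} \<Longrightarrow> b \<in> {1..l} \<Longrightarrow> (v a = v b) = (a = b)"
  using inj_on_eq_iff[OF hf_inj] by blast

lemma mem_hs: "i \<in> {1..r} \<Longrightarrow> p \<in> {1..r} \<Longrightarrow> w \<in> hs p \<Longrightarrow> (w \<in> hs i) = (i = p)"
  using hf_disj[of i p w] by auto

lemma w_ne_v: "p \<in> {1..r} \<Longrightarrow> w \<in> hs p \<Longrightarrow> j \<in> {1..l} \<Longrightarrow> (w = v j) = False"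
  using hf_disjv[of p j] by auto

lemmas mem_simps = hf_disjv veq mem_hs w_ne_v

lemma set_eq_pairs: "(\<And>i j. i\<in>{1..r} \<Longrightarrow> j\<in>{1..l} \<Longrightarrow> P i j \<longleftrightarrow> (i,j) \<in> S) \<Longrightarrow> S \<subseteq> {1..r}\<times>{1..l}
   \<Longrightarrow> {(i,j)\<in>{1..r}\<times>{1..l}. P i j} = S"
  by auto

lemma deg_v: "a \<in> {1..l} \<Longrightarrow> hdeg H (v a) = r"
proof -
  assume a: "a \<in> {1..l}"
  have "{(i,j)\<in>{1..r} \<times> {1..l}. v a \<in> hs i \<union> {v j}} = {1..r} \<times> {a}"
  proof (rule set_eq_pairs)
    fix i j assume ij: "i \<in> {1..r}" "j \<in> {1..l}"
    show "v a \<in> hs i \<union> {v j} \<longleftrightarrow> (i,j) \<in> {1..r} \<times> {a}" using hf_disjv[OF ij(1) a] veq[OF a ij(2)] ij by auto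
  qed (use a in auto)
  then show ?thesis unfolding hdeg_def hf_card by simp
qed

lemma deg_w: "p \<in> {1..r} \<Longrightarrow> w \<in> hs p \<Longrightarrow> hdeg H w = l"
proof -
  assume p: "p \<in> {1..r}" "w \<in> hs p"
  have "{(i,j)\<in>{1..r} \<times> {1..l}. w \<in> hs i \<union> {v j}} = {p} \<times> {1..l}"
  proof (rule set_eq_pairs)
    fix i j assume ij: "i \<in> {1..r}" "j \<in> {1..l}"
    show "w \<in> hs i \<union> {v j} \<longleftrightarrow> (i,j) \<in> {p} \<times> {1..l}" using mem_hs[OF ij(1) p] w_ne_v[OF p ij(2)] ij by auto
  qed (use p in auto)
  then show ?thesis unfolding hdeg_def hf_card by simp
qed

lemma Lf_vv: "a \<in> {1..l} \<Longrightarrow> b \<in> {1..l} \<Longrightarrow> Lf H (v a) (v b) = (if a = b then 1 else 0)"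
proof -
  assume a: "a \<in> {1..l}" "b \<in> {1..l}"
  have "{(i,j)\<in>{1..r} \<times> {1..l}. v a \<in> hs i \<union> {v j} \<and> v b \<in> hs i \<union> {v j}} = (if a = b then {1..r} \<times> {a} else {})"
  proof (rule set_eq_pairs)
    fix i j assume ij: "i \<in> {1..r}" "j \<in> {1..l}"
    show "(v a \<in> hs i \<union> {v j} \<and> v b \<in> hs i \<union> {v j}) \<longleftrightarrow> (i,j) \<in> (if a = b then {1..r} \<times> {a} else {})"
      using hf_disjv[OF ij(1) a(1)] veq[OF a(1) ij(2)] hf_disjv[OF ij(1) a(2)] veq[OF a(2) ij(2)] ij by auto
  qed (use a in auto)
  then show ?thesis unfolding Lf_def hf_card using veq[OF a] by auto
qed

lemma Lf_vw: "a \<in> {1..l} \<Longrightarrow> p \<in> {1..r} \<Longrightarrow> w \<in> hs p \<Longrightarrow> Lf H (v a) w = 1 / of_nat r"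
proof -
  assume a: "a \<in> {1..l}" and p: "p \<in> {1..r}" "w \<in> hs p"
  have "{(i,j)\<in>{1..r} \<times> {1..l}. v a \<in> hs i \<union> {v j} \<and> w \<in> hs i \<union> {v j}} = {(p,a)}"
  proof (rule set_eq_pairs)
    fix i j assume ij: "i \<in> {1..r}" "j \<in> {1..l}"
    show "(v a \<in> hs i \<union> {v j} \<and> w \<in> hs i \<union> {v j}) \<longleftrightarrow> (i,j) \<in> {(p,a)}"
      using hf_disjv[OF ij(1) a] veq[OF a ij(2)] mem_hs[OF ij(1) p] w_ne_v[OF p ij(2)] ij by auto
  qed (use a p in auto)
  moreover have "v a \<noteq> w" using w_ne_v[OF p a] by auto
  ultimately show ?thesis unfolding Lf_def hf_card using deg_v[OF a] by simp
qed

lemma Lf_wv: "a \<in> {1..l} \<Longrightarrow> p \<in> {1..r} \<Longrightarrow> w \<in> hs p \<Longrightarrow> Lf H w (v a) = 1 / of_nat l"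
proof -
  assume a: "a \<in> {1..l}" and p: "p \<in> {1..r}" "w \<in> hs p"
  have "{(i,j)\<in>{1..r} \<times> {1..l}. w \<in> hs i \<union> {v j} \<and> v a \<in> hs i \<union> {v j}} = {(p,a)}"
  proof (rule set_eq_pairs)
    fix i j assume ij: "i \<in> {1..r}" "j \<in> {1..l}"
    show "(w \<in> hs i \<union> {v j} \<and> v a \<in> hs i \<union> {v j}) \<longleftrightarrow> (i,j) \<in> {(p,a)}"
      using hf_disjv[OF ij(1) a] veq[OF a ij(2)] mem_hs[OF ij(1) p] w_ne_v[OF p ij(2)] ij by auto
  qed (use a p in auto)
  moreover have "w \<noteq> v a" using w_ne_v[OF p a] by auto
  ultimately show ?thesis unfolding Lf_def hf_card using deg_w[OF p] by simp
qed

lemma Lf_ww: "p \<in> {1..r} \<Longrightarrow> w \<in> hs p \<Longrightarrow> q \<in> {1..r} \<Longrightarrow> w' \<in> hs q \<Longrightarrow> Lf H w w' = (if p = q then 1 else 0)"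
proof -
  assume p: "p \<in> {1..r}" "w \<in> hs p" and q: "q \<in> {1..r}" "w' \<in> hs q"
  have "{(i,j)\<in>{1..r} \<times> {1..l}. w \<in> hs i \<union> {v j} \<and> w' \<in> hs i \<union> {v j}} = (if p = q then {p} \<times> {1..l} else {})"
  proof (rule set_eq_pairs)
    fix i j assume ij: "i \<in> {1..r}" "j \<in> {1..l}"
    show "(w \<in> hs i \<union> {v j} \<and> w' \<in> hs i \<union> {v j}) \<longleftrightarrow> (i,j) \<in> (if p = q then {p} \<times> {1..l} else {})"
      using mem_hs[OF ij(1) p] w_ne_v[OF p ij(2)] mem_hs[OF ij(1) q] w_ne_v[OF q ij(2)] ij by auto
  qed (use p in auto)
  moreover have "w = w' \<Longrightarrow> p = q" using p q hf_disj by blast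
  ultimately show ?thesis unfolding Lf_def hf_card using deg_w[OF p] l1 by auto
qed

end


lemma block_sim:
  fixes T :: "'b::field mat"
  assumes T: "T \<in> carrier_mat k m" and S: "S \<in> carrier_mat m k" and D: "D \<in> carrier_mat m m"
    and L: "L \<in> carrier_mat m m" and N: "N \<in> carrier_mat k m"
    and NS: "N * S = 0\<^sub>m k k" and NL: "N * L = N + T" and SND: "S * N + D = L"
  shows "char_poly (four_block_mat (1\<^sub>m k) T S D) = char_poly (1\<^sub>m k) * char_poly L"
proof -
  define M where "M = four_block_mat (1\<^sub>m k) T S D"
  define Q where "Q = four_block_mat (1\<^sub>m k) N (0\<^sub>m m k) (1\<^sub>m m)"
  define Qi where "Qi = four_block_mat (1\<^sub>m k) (- N) (0\<^sub>m m k) (1\<^sub>m m)"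
  define B where "B = four_block_mat (1\<^sub>m k) (0\<^sub>m k m) S L"
  have cM: "M \<in> carrier_mat (k+m) (k+m)" unfolding M_def using D by simp
  have cQ: "Q \<in> carrier_mat (k+m) (k+m)" unfolding Q_def by simp
  have cQi: "Qi \<in> carrier_mat (k+m) (k+m)" unfolding Qi_def by simp
  have cB: "B \<in> carrier_mat (k+m) (k+m)" unfolding B_def using L by simp
  have mN: "- N \<in> carrier_mat k m" using N by simp
  have z0: "- 0\<^sub>m m m = (0\<^sub>m m m :: 'b mat)" by (rule eq_matI) auto
  have z1: "N + - N = 0\<^sub>m k m" by (rule eq_matI) (use N in auto)
  have QQi: "Q * Qi = 1\<^sub>m (k+m)"
    unfolding Q_def Qi_def
    by (subst mult_four_block_mat[OF one_carrier_mat N zero_carrier_mat one_carrier_mat one_carrier_mat mN zero_carrier_mat one_carrier_mat]) (use N mN z0 z1 in \<open>auto simp: left_mult_zero_mat right_mult_zero_mat\<close>)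
  have QiQ: "Qi * Q = 1\<^sub>m (k+m)"
    unfolding Q_def Qi_def
    by (subst mult_four_block_mat[OF one_carrier_mat mN zero_carrier_mat one_carrier_mat one_carrier_mat N zero_carrier_mat one_carrier_mat]) (use N mN z0 z1 in \<open>auto simp: left_mult_zero_mat right_mult_zero_mat\<close>)
  have MQ: "M * Q = Q * B"
  proof -
    have "M * Q = four_block_mat (1\<^sub>m k) (N + T) S (S * N + D)"
      unfolding M_def Q_def
      by (subst mult_four_block_mat[OF one_carrier_mat T S D one_carrier_mat N zero_carrier_mat one_carrier_mat]) (use N T S D in \<open>auto simp: left_mult_zero_mat right_mult_zero_mat\<close>)
    also have "\<dots> = Q * B"
      unfolding B_def Q_def
      by (subst mult_four_block_mat[OF one_carrier_mat N zero_carrier_mat one_carrier_mat one_carrier_mat zero_carrier_mat S L]) (use N T S D L NS NL SND in \<open>auto simp: left_mult_zero_mat right_mult_zero_mat\<close>)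
    finally show ?thesis .
  qed
  have "M = Q * B * Qi"
  proof -
    have "M = M * (Q * Qi)" using QQi cM by simp
    also have "\<dots> = M * Q * Qi" using cM cQ cQi by simp
    also have "\<dots> = Q * B * Qi" using MQ by simp
    finally show ?thesis .
  qed
  then have "similar_mat M B"
    unfolding similar_mat_def similar_mat_wit_def Let_def
    by (intro exI[of _ Q] exI[of _ Qi]) (use cM cQ cQi cB QQi QiQ in auto)
  then have "char_poly M = char_poly B" by (rule char_poly_similar)
  also have "\<dots> = char_poly (1\<^sub>m k) * char_poly L"
    unfolding B_def by (rule char_poly_block) (use S L in auto)
  finally show ?thesis unfolding M_def .
qed



lemma sum_first:
  fixes f :: "nat \<Rightarrow> 'b::comm_semiring_1"
  assumes "0 < m" shows "(\<Sum>t\<in>{0..<m}. (if t = 0 then 1 else 0) * f t) = f 0"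
proof -
  have "(\<Sum>t\<in>{0..<m}. (if t = 0 then 1 else 0) * f t) = (\<Sum>t\<in>{0..<m}. if t = 0 then f t else 0)"
    by (rule sum.cong) auto
  also have "\<dots> = f 0" using assms by simp
  finally show ?thesis .
qed

lemma sum_const_col:
  fixes f :: "nat \<Rightarrow> 'b::comm_semiring_1"
  assumes "\<And>b. b < k \<Longrightarrow> f b = c"
  shows "(\<Sum>b\<in>{0..<k}. f b * (if j = 0 then 1 else 0)) = (if j = 0 then of_nat k * c else 0)"
proof -
  have "(\<Sum>b\<in>{0..<k}. f b * (if j = 0 then 1 else 0)) = (\<Sum>b\<in>{0..<k}. (if j = 0 then c else 0))"
    by (rule sum.cong) (use assms in auto)
  then show ?thesis by simp
qed

theorem mainTheorem6:
  fixes V :: "'a::linorder set" and H :: "'a set set" and l r :: nat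
    and v :: "nat \<Rightarrow> 'a" and hs :: "nat \<Rightarrow> 'a set"
  assumes "hyperflower V H l r v hs" and "l \<ge> 1"
  shows "hspectrum V H =
           hspectrum (V - v ` {2..l}) {h\<in>H. \<forall>j\<in>{2..l}. v j \<notin> h} + replicate_mset (l - 1) 1"
proof -
  note hf = assms(1) and l1 = assms(2)
  define k where "k = l - 1"
  define W where "W = (\<Union>i\<in>{1..r}. hs i)"
  define Vh where "Vh = V - v ` {2..l}"
  define Hh where "Hh = {h\<in>H. \<forall>j\<in>{2..l}. v j \<notin> h}"
  have finV: "finite V" by (rule hf_fin[OF hf l1])
  have VW: "V = v ` {1..l} \<union> W" using hf_V[OF hf l1] unfolding W_def .
  have finW: "finite W" using finV VW by simp
  have r1: "r \<ge> 1" by (rule hf_r[OF hf l1])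
  have Wp: "\<exists>p\<in>{1..r}. w \<in> hs p" if "w \<in> W" for w using that unfolding W_def by blast
  have vW: "v a \<notin> W" if "a \<in> {1..l}" for a using hf_disjv[OF hf l1 _ that] unfolding W_def by blast
  have veq: "(v a = v b) = (a = b)" if "a \<in> {1..l}" "b \<in> {1..l}" for a b using veq[OF hf l1 that] .
  define ws where "ws = vlist W"
  define zs where "zs = v 1 # ws"
  define us where "us = map (\<lambda>a. v (a+2)) [0..<k]"
  define ys where "ys = us @ zs"
  define m where "m = length zs"
  have dws: "distinct ws" "set ws = W" using finW by (auto simp: ws_def vlist_def)
  have v1W: "v 1 \<notin> W" using vW l1 by auto
  have dzs: "distinct zs" using dws v1W by (simp add: zs_def)
  have Vh_eq: "Vh = insert (v 1) W"
  proof -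
    have "v ` {1..l} - v ` {2..l} = {v 1}" using veq l1 by fastforce
    moreover have "W \<inter> v ` {2..l} = {}" using vW by auto
    ultimately show ?thesis unfolding Vh_def VW by blast
  qed
  have szs: "set zs = Vh" using dws Vh_eq by (simp add: zs_def)
  have sus: "set us = v ` {2..l}"
  proof -
    have "(\<lambda>a. a + 2) ` {0..<k} = {2..l}"
    proof (rule subset_antisym)
      show "{2..l} \<subseteq> (\<lambda>a. a + 2) ` {0..<k}"
      proof
        fix x assume "x \<in> {2..l}"
        then have "x = (x - 2) + 2" "x - 2 \<in> {0..<k}" unfolding k_def by auto
        then show "x \<in> (\<lambda>a. a + 2) ` {0..<k}" by (metis imageI)
      qed
    qed (auto simp: k_def)
    moreover have "set us = v ` ((\<lambda>a. a + 2) ` {0..<k})" unfolding us_def by (simp only: set_map set_upt image_image)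
    ultimately show ?thesis by simp
  qed
  have dus: "distinct us" unfolding us_def
  proof (subst distinct_map, intro conjI)
    show "inj_on (\<lambda>a. v (a + 2)) (set [0..<k])"
      by (rule inj_onI) (use veq in \<open>auto simp: k_def\<close>)
  qed simp
  have dys: "distinct ys" unfolding ys_def using dus dzs sus szs Vh_def by auto
  have sys: "set ys = V" unfolding ys_def using sus szs Vh_def VW by auto
  have lus: "length us = k" by (simp add: us_def)
  have m1: "m = Suc (card W)" using dws finW by (simp add: m_def zs_def distinct_card[symmetric])
  have lys: "length ys = k + m" using lus by (simp add: ys_def m_def)
  have ys_nth: "ys ! i = (if i < k then v (i + 2) else zs ! (i - k))" if "i < k + m" for i
    using that lus by (simp add: ys_def nth_append us_def)
  have zs0: "zs ! 0 = v 1" by (simp add: zs_def)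
  have zsW: "zs ! t \<in> W" if "0 < t" "t < m" for t
  proof -
    have "t - 1 < length ws" using that by (simp add: m_def zs_def)
    then have "ws ! (t - 1) \<in> W" using dws(2) nth_mem by blast
    then show ?thesis using that by (simp add: zs_def nth_Cons')
  qed
  have Hh_eq: "Hh = (\<lambda>(i,j). hs i \<union> {v j}) ` ({1..r} \<times> {1..1})"
  proof -
    have c: "(\<forall>j'\<in>{2..l}. v j' \<notin> hs i \<union> {v j}) \<longleftrightarrow> j = 1" if "i \<in> {1..r}" "j \<in> {1..l}" for i j
      using hf_disjv[OF hf l1 that(1)] veq that by fastforce
    show ?thesis
    proof (intro equalityI subsetI)
      fix h assume "h \<in> Hh"
      then obtain i j where ij: "i \<in> {1..r}" "j \<in> {1..l}" "h = hs i \<union> {v j}"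
        and cc: "\<forall>j'\<in>{2..l}. v j' \<notin> h" unfolding Hh_def hf_H[OF hf l1] by auto
      then have "j = 1" using c[OF ij(1,2)] by simp
      then show "h \<in> (\<lambda>(i,j). hs i \<union> {v j}) ` ({1..r} \<times> {1..1})" using ij by auto
    next
      fix h assume "h \<in> (\<lambda>(i,j). hs i \<union> {v j}) ` ({1..r} \<times> {1..1})"
      then obtain i where i: "i \<in> {1..r}" "h = hs i \<union> {v 1}" by auto
      have "h \<in> H" unfolding hf_H[OF hf l1] using i l1 by force
      moreover have "\<forall>j'\<in>{2..l}. v j' \<notin> h" using c[OF i(1), of 1] l1 i by simp
      ultimately show "h \<in> Hh" unfolding Hh_def by simp
    qed
  qed
  have hfh: "hyperflower Vh Hh 1 r v hs"
    unfolding hyperflower_def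
  proof (intro conjI)
    show "hypergraph Vh Hh" unfolding hypergraph_def
    proof (intro conjI ballI)
      show "finite Vh" using finW Vh_eq by simp
    next
      fix h assume "h \<in> Hh"
      then obtain i where i: "i \<in> {1..r}" "h = hs i \<union> {v 1}" using Hh_eq by auto
      then show "h \<noteq> {}" by auto
      show "h \<subseteq> Vh" using i Vh_eq unfolding W_def by auto
    next
      fix x assume "x \<in> Vh"
      then have "x = v 1 \<or> x \<in> W" using Vh_eq by auto
      then obtain i where "i \<in> {1..r}" "x \<in> hs i \<union> {v 1}" using r1 Wp by (metis UnI1 UnI2 atLeastAtMost_iff insertI1 order_refl)
      then show "\<exists>h\<in>Hh. x \<in> h" using Hh_eq by auto
    qed
    show "inj_on v {1..1}" by simp
    show "\<forall>i\<in>{1..r}. hs i \<noteq> {} \<and> hs i \<inter> v ` {1..1} = {}"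
      using hf_ne[OF hf l1] hf_disjv[OF hf l1] l1 by auto
    show "\<forall>i\<in>{1..r}. \<forall>k\<in>{1..r}. i \<noteq> k \<longrightarrow> hs i \<inter> hs k = {}"
      using hf_disj[OF hf l1] by blast
    show "Vh = v ` {1..1} \<union> (\<Union>i\<in>{1..r}. hs i)" using Vh_eq W_def by auto
    show "Hh = {hs i \<union> {v j} |i j. i \<in> {1..r} \<and> j \<in> {1..1}}" using Hh_eq by auto
  qed
  have l1': "(1::nat) \<ge> 1" by simp
  have LH_vv: "Lf H (v a) (v b) = (if a = b then 1 else 0)" if "a \<in> {1..l}" "b \<in> {1..l}" for a b
    using Lf_vv[OF hf l1 that] .
  have LH_vw: "Lf H (v a) w = 1 / of_nat r" if "a \<in> {1..l}" "w \<in> W" for a w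
    using Wp[OF that(2)] Lf_vw[OF hf l1 that(1)] by blast
  have LH_wv: "Lf H w (v a) = 1 / of_nat l" if "a \<in> {1..l}" "w \<in> W" for a w
    using Wp[OF that(2)] Lf_wv[OF hf l1 that(1)] by blast
  have Lh_vw: "Lf Hh (v 1) w = 1 / of_nat r" if "w \<in> W" for w
    using Wp[OF that] Lf_vw[OF hfh l1', of 1] by auto
  have Lh_wv: "Lf Hh w (v 1) = 1" if "w \<in> W" for w
    using Wp[OF that] Lf_wv[OF hfh l1', of 1] by auto
  have L_ww: "Lf H w w' = Lf Hh w w'" if "w \<in> W" "w' \<in> W" for w w'
    using Wp[OF that(1)] Wp[OF that(2)] Lf_ww[OF hf l1] Lf_ww[OF hfh l1'] by metis
  have L_same: "Lf G x x = 1" for G :: "'a set set" and x by (simp add: Lf_def)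
  have sp1: "hspectrum V H = proots (char_poly (mat (k+m) (k+m) (\<lambda>(i,j). Lf H (ys!i) (ys!j))))"
  proof -
    have "card V = length (vlist V)" using finV by (simp add: vlist_def)
    then have "hspectrum V H = proots (char_poly (mat (length (vlist V)) (length (vlist V)) (\<lambda>(i,j). Lf H (vlist V!i) (vlist V!j))))"
      unfolding hspectrum_def lap by simp
    also have "\<dots> = proots (char_poly (mat (length ys) (length ys) (\<lambda>(i,j). Lf H (ys!i) (ys!j))))"
      by (subst perm_char_poly[of "vlist V" ys]) (use finV dys sys in \<open>auto simp: vlist_def\<close>)
    finally show ?thesis using lys by simp
  qed
  have sp2: "hspectrum Vh Hh = proots (char_poly (mat m m (\<lambda>(i,j). Lf Hh (zs!i) (zs!j))))"
  proof -
    have finVh: "finite Vh" using finW Vh_eq by simp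
    have "card Vh = length (vlist Vh)" using finVh by (simp add: vlist_def)
    then have "hspectrum Vh Hh = proots (char_poly (mat (length (vlist Vh)) (length (vlist Vh)) (\<lambda>(i,j). Lf Hh (vlist Vh!i) (vlist Vh!j))))"
      unfolding hspectrum_def lap by simp
    also have "\<dots> = proots (char_poly (mat (length zs) (length zs) (\<lambda>(i,j). Lf Hh (zs!i) (zs!j))))"
      by (subst perm_char_poly[of "vlist Vh" zs]) (use finVh dzs szs in \<open>auto simp: vlist_def\<close>)
    finally show ?thesis by (simp add: m_def)
  qed

  define T where "T = mat k m (\<lambda>(a,j). Lf H (v (a+2)) (zs!j))"
  define S where "S = mat m k (\<lambda>(i,b). Lf H (zs!i) (v (b+2)))"
  define D where "D = mat m m (\<lambda>(i,j). Lf H (zs!i) (zs!j))"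
  define Lh where "Lh = mat m m (\<lambda>(i,j). Lf Hh (zs!i) (zs!j))"
  define N where "N = mat k m (\<lambda>(a,j). if j = 0 then (1::complex) else 0)"
  have m0: "0 < m" by (simp add: m_def zs_def)
  have ak: "a + 2 \<in> {1..l}" if "a < k" for a using that by (simp add: k_def)

  have Meq: "mat (k+m) (k+m) (\<lambda>(i,j). Lf H (ys!i) (ys!j)) = four_block_mat (1\<^sub>m k) T S D"
  proof (rule eq_matI)
    fix i j assume "i < dim_row (four_block_mat (1\<^sub>m k) T S D)" "j < dim_col (four_block_mat (1\<^sub>m k) T S D)"
    then have i: "i < k + m" and j: "j < k + m" by (auto simp: D_def)
    show "mat (k+m) (k+m) (\<lambda>(i,j). Lf H (ys!i) (ys!j)) $$ (i,j) = four_block_mat (1\<^sub>m k) T S D $$ (i,j)"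
      using i j ys_nth[OF i] ys_nth[OF j] LH_vv[OF ak ak] by (auto simp: T_def S_def D_def)
  qed (auto simp: D_def)

  have NS: "N * S = 0\<^sub>m k k"
  proof (rule eq_matI)
    fix a b assume "a < dim_row (0\<^sub>m k k)" "b < dim_col (0\<^sub>m k k :: complex mat)"
    then have a: "a < k" and b: "b < k" by auto
    have "(N * S) $$ (a,b) = (\<Sum>t\<in>{0..<m}. (if t = 0 then 1 else 0) * Lf H (zs!t) (v (b+2)))"
      using a b by (simp add: N_def S_def scalar_prod_def)
    also have "\<dots> = Lf H (v 1) (v (b+2))" using sum_first[OF m0, of "\<lambda>t. Lf H (zs!t) (v (b+2))"] zs0 by simp
    also have "\<dots> = 0" using LH_vv[of 1 "b+2"] ak[OF b] l1 by simp
    finally show "(N * S) $$ (a,b) = 0\<^sub>m k k $$ (a,b)" using a b by simp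
  qed (auto simp: N_def S_def)

  have NL: "N * Lh = N + T"
  proof (rule eq_matI)
    fix a j assume "a < dim_row (N + T)" "j < dim_col (N + T)"
    then have a: "a < k" and j: "j < m" by (auto simp: N_def T_def)
    have "(N * Lh) $$ (a,j) = (\<Sum>t\<in>{0..<m}. (if t = 0 then 1 else 0) * Lf Hh (zs!t) (zs!j))"
      using a j by (simp add: N_def Lh_def scalar_prod_def)
    also have "\<dots> = Lf Hh (v 1) (zs!j)" using sum_first[OF m0, of "\<lambda>t. Lf Hh (zs!t) (zs!j)"] zs0 by simp
    also have "\<dots> = (N + T) $$ (a,j)"
    proof (cases "j = 0")
      case True
      then show ?thesis using a j zs0 L_same LH_vv[of "a+2" 1] ak[OF a] l1 by (simp add: N_def T_def)
    next
      case False
      then have w: "zs!j \<in> W" using zsW j by simp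
      then show ?thesis using a j False Lh_vw[OF w] LH_vw[OF ak[OF a] w] by (simp add: N_def T_def)
    qed
    finally show "(N * Lh) $$ (a,j) = (N + T) $$ (a,j)" .
  qed (auto simp: N_def T_def Lh_def)

  have SND: "S * N + D = Lh"
  proof (rule eq_matI)
    fix i j assume "i < dim_row Lh" "j < dim_col Lh"
    then have i: "i < m" and j: "j < m" by (auto simp: Lh_def)
    have "(S * N) $$ (i,j) = (\<Sum>b\<in>{0..<k}. Lf H (zs!i) (v (b+2)) * (if j = 0 then 1 else 0))"
      using i j by (simp add: N_def S_def scalar_prod_def)
    also have "\<dots> = (if j = 0 then of_nat k * (if i = 0 then 0 else 1 / of_nat l) else 0)"
    proof (rule sum_const_col)
      fix b assume b: "b < k"
      show "Lf H (zs!i) (v (b+2)) = (if i = 0 then 0 else 1 / of_nat l)"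
      proof (cases "i = 0")
        case True
        then show ?thesis using zs0 LH_vv[of 1 "b+2"] ak[OF b] l1 by simp
      next
        case False
        then show ?thesis using zsW[of i] i LH_wv[OF ak[OF b]] by simp
      qed
    qed
    finally have SN: "(S * N) $$ (i,j) = (if j = 0 then of_nat k * (if i = 0 then 0 else 1 / of_nat l) else 0)" .
    have kl: "of_nat k * (1 / of_nat l) + 1 / of_nat l = (1::complex)"
    proof -
      have "of_nat k * (1 / of_nat l) + 1 / of_nat l = (of_nat k + 1) / (of_nat l :: complex)"
        by (simp add: add_divide_distrib)
      also have "of_nat k + 1 = (of_nat l :: complex)" using l1 unfolding k_def by (simp add: of_nat_diff)
      finally show ?thesis using l1 by simp
    qed
    have "(S * N + D) $$ (i,j) = (S * N) $$ (i,j) + D $$ (i,j)"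
      using i j by (simp add: S_def N_def D_def)
    also have "\<dots> = Lh $$ (i,j)"
    proof (cases "j = 0")
      case j0: True
      show ?thesis
      proof (cases "i = 0")
        case True
        then show ?thesis using j0 SN i j zs0 L_same by (simp add: D_def Lh_def)
      next
        case False
        then have w: "zs!i \<in> W" using zsW i by simp
        then show ?thesis using j0 False SN i j zs0 LH_wv[of 1, OF _ w] Lh_wv[OF w] kl l1 by (simp add: D_def Lh_def)
      qed
    next
      case jn: False
      then have w: "zs!j \<in> W" using zsW j by simp
      show ?thesis
      proof (cases "i = 0")
        case True
        then show ?thesis using jn SN i j zs0 LH_vw[of 1, OF _ w] Lh_vw[OF w] l1 by (simp add: D_def Lh_def)
      next
        case False
        then have w': "zs!i \<in> W" using zsW i by simp
        then show ?thesis using jn False SN i j L_ww[OF w' w] by (simp add: D_def Lh_def)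
      qed
    qed
    finally show "(S * N + D) $$ (i,j) = Lh $$ (i,j)" .
  qed (auto simp: S_def N_def D_def Lh_def)

  have cp: "char_poly (four_block_mat (1\<^sub>m k) T S D) = char_poly (1\<^sub>m k) * char_poly Lh"
    by (rule block_sim[OF _ _ _ _ _ NS NL SND]) (auto simp: T_def S_def D_def Lh_def N_def)
  have nz: "char_poly (M :: complex mat) \<noteq> 0" if "M \<in> carrier_mat n n" for M n
    using degree_monic_char_poly[OF that] by auto
  have "hspectrum V H = proots (char_poly (1\<^sub>m k) * char_poly Lh)"
    unfolding sp1 Meq cp ..
  also have "\<dots> = replicate_mset k 1 + proots (char_poly Lh)"
    by (subst proots_mult) (use nz[of "1\<^sub>m k" k] nz[of Lh m] proots_one in \<open>auto simp: Lh_def\<close>)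
  also have "\<dots> = hspectrum Vh Hh + replicate_mset (l - 1) 1"
    unfolding sp2 Lh_def k_def by (simp add: add.commute)
  finally show ?thesis unfolding Vh_def Hh_def .
qed


end
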